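(* Let $p_1,\dots,p_r,q_1,\dots,q_s$ be positive integers with $\sum_ip_i=\sum_jq_j$ and $\gcd(p_1,\dots,q_s)=1$, let $q$ be a prime power, $\lambda\in\mathbb{F}_q^\times$, and let $C$ be a non-empty cell with $|S(C)|\le r+s-1$. Then $$N_{C,\lambda}=\frac{(q-1)^{r+s-l(C)-2}}{q}+\frac{(-1)^{|S(C)|}(q-1)^{|S(C)|-l(C)-1}}{q}\sum_{m=0}^{q-2}\delta(a_Sm)\prod_{i=1}^rg(p_im)\prod_{j=1}^sg(-q_jm)\,\omega(\epsilon\lambda)^m,$$ where $\epsilon=(-1)^{q_1+\cdots+q_s}$ and $\delta(x)=1$ if $x\equiv0\pmod{q-1}$ and $0$ otherwise. (In particular the count does not depend on the choice of the coordinate set equal to $1$.)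
   Context: Fix a nontrivial additive character $\psi_q$ of $\mathbb{F}_q$, a generator $\omega$ of the character group of $\mathbb{F}_q^\times$, and $g(m)=\sum_{x\in\mathbb{F}_q^\times}\omega(x)^m\psi_q(x)$. A cell is a finite (possibly empty) sequence of distinct pairs $(i_1,j_1),\dots,(i_l,j_l)$ with $1\le i_k\le r$, $1\le j_k\le s$, $i_1\le\cdots\le i_l$, $j_1\le\cdots\le j_l$; $l(C)=l$, $S_x(C)=\{i_1,\dots,i_l\}$, $S_y(C)=\{j_1,\dots,j_l\}$, $|S(C)|=|S_x(C)|+|S_y(C)|$, and $a_S=\gcd(\{p_i:i\in S_x(C)\}\cup\{q_j:j\in S_y(C)\})$. $N'_{C,\lambda}$ is the number of tuples $(x_i)_{i\notin S_x(C)},(y_j)_{j\notin S_y(C)},z$ with all entries in $\mathbb{F}_q^\times$, where one chosen coordinate among these $x_i,y_j$ is fixed to be $1$, satisfying $\sum_{i\notin S_x}x_i=\sum_{j\notin S_y}y_j$ and $\lambda z^{a_S}\prod_{i\notin S_x}x_i^{p_i}=\prod_{j\notin S_y}y_j^{q_j}$; and $N_{C,\lambda}=(q-1)^{|S(C)|-l(C)-1}N'_{C,\lambda}$. *)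

theory Defs
  imports Complex_Main "HOL-Library.FuncSet" "HOL-Library.Cardinality"
begin

definition nontriv_add_char :: "('a::{field,finite} \<Rightarrow> complex) \<Rightarrow> bool" where
  "nontriv_add_char \<psi> \<longleftrightarrow>
     (\<forall>x y. \<psi> (x + y) = \<psi> x * \<psi> y) \<and> (\<forall>x. \<psi> x \<noteq> 0) \<and> (\<exists>x. \<psi> x \<noteq> 1)"

text \<open>Multiplicative characters of the unit group (only values on nonzero elements matter).\<close>
definition mult_char :: "('a::{field,finite} \<Rightarrow> complex) \<Rightarrow> bool" where
  "mult_char \<chi> \<longleftrightarrow>
     (\<forall>x y. x \<noteq> 0 \<longrightarrow> y \<noteq> 0 \<longrightarrow> \<chi> (x * y) = \<chi> x * \<chi> y) \<and> (\<forall>x. x \<noteq> 0 \<longrightarrow> \<chi> x \<noteq> 0)"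

definition mult_char_generator :: "('a::{field,finite} \<Rightarrow> complex) \<Rightarrow> bool" where
  "mult_char_generator \<omega> \<longleftrightarrow> mult_char \<omega> \<and>
     (\<forall>\<chi>::'a \<Rightarrow> complex. mult_char \<chi> \<longrightarrow> (\<exists>k::nat. \<forall>x. x \<noteq> 0 \<longrightarrow> \<chi> x = \<omega> x ^ k))"

definition gauss :: "('a::{field,finite} \<Rightarrow> complex) \<Rightarrow> ('a \<Rightarrow> complex) \<Rightarrow> int \<Rightarrow> complex" where
  "gauss \<omega> \<psi> m = (\<Sum>x\<in>{x::'a. x \<noteq> 0}. (\<omega> x) powi m * \<psi> x)"

definition is_cell :: "nat \<Rightarrow> nat \<Rightarrow> (nat \<times> nat) list \<Rightarrow> bool" where
  "is_cell r s C \<longleftrightarrow> distinct C \<and>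
     (\<forall>(i,j)\<in>set C. 1 \<le> i \<and> i \<le> r \<and> 1 \<le> j \<and> j \<le> s) \<and>
     sorted (map fst C) \<and> sorted (map snd C)"

definition Sx :: "(nat \<times> nat) list \<Rightarrow> nat set" where
  "Sx C = fst ` set C"

definition Sy :: "(nat \<times> nat) list \<Rightarrow> nat set" where
  "Sy C = snd ` set C"

definition card_S :: "(nat \<times> nat) list \<Rightarrow> nat" where
  "card_S C = card (Sx C) + card (Sy C)"

definition a_S :: "(nat \<Rightarrow> nat) \<Rightarrow> (nat \<Rightarrow> nat) \<Rightarrow> (nat \<times> nat) list \<Rightarrow> nat" where
  "a_S p qq C = Gcd (p ` Sx C \<union> qq ` Sy C)"

text \<open>Admissible choice of the coordinate fixed to 1: Inl i means x_i, Inr j means y_j.\<close>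
definition valid_choice :: "nat \<Rightarrow> nat \<Rightarrow> (nat \<times> nat) list \<Rightarrow> nat + nat \<Rightarrow> bool" where
  "valid_choice r s C c \<longleftrightarrow>
     (case c of Inl i \<Rightarrow> i \<in> {1..r} - Sx C | Inr j \<Rightarrow> j \<in> {1..s} - Sy C)"

definition N'_cell :: "nat \<Rightarrow> nat \<Rightarrow> (nat \<Rightarrow> nat) \<Rightarrow> (nat \<Rightarrow> nat) \<Rightarrow> (nat \<times> nat) list
    \<Rightarrow> 'a::{field,finite} \<Rightarrow> nat + nat \<Rightarrow> nat" where
  "N'_cell r s p qq C lam c = card
     {(xv, yv, z). xv \<in> (({1..r} - Sx C) \<rightarrow>\<^sub>E {x::'a. x \<noteq> 0}) \<and>
                   yv \<in> (({1..s} - Sy C) \<rightarrow>\<^sub>E {y::'a. y \<noteq> 0}) \<and> z \<noteq> 0 \<and>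
                   (case c of Inl i \<Rightarrow> xv i = 1 | Inr j \<Rightarrow> yv j = 1) \<and>
                   (\<Sum>i\<in>{1..r} - Sx C. xv i) = (\<Sum>j\<in>{1..s} - Sy C. yv j) \<and>
                   lam * z ^ a_S p qq C * (\<Prod>i\<in>{1..r} - Sx C. xv i ^ p i)
                     = (\<Prod>j\<in>{1..s} - Sy C. yv j ^ qq j)}"

text \<open>N_{C,lambda} = (q-1)^(|S(C)| - l(C) - 1) N'_{C,lambda}; the exponent is nonnegative for
  nonempty cells (taken here as an integer power in the complex numbers).\<close>
definition N_cell :: "nat \<Rightarrow> nat \<Rightarrow> (nat \<Rightarrow> nat) \<Rightarrow> (nat \<Rightarrow> nat) \<Rightarrow> (nat \<times> nat) list
    \<Rightarrow> 'a::{field,finite} \<Rightarrow> nat + nat \<Rightarrow> complex" where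
  "N_cell r s p qq C lam c =
     (of_nat (CARD('a)) - 1) powi (int (card_S C) - int (length C) - 1) * of_nat (N'_cell r s p qq C lam c)"

end

theory Submission
  imports Defs "HOL-Algebra.Multiplicative_Group"
begin

definition fring :: "'a::field ring" where
  "fring = \<lparr>carrier = UNIV, monoid.mult = (\<lambda>x y. x * y), one = 1, ring.zero = 0, add = (\<lambda>x y. x + y)\<rparr>"

lemma field_fring: "field (fring :: 'a::field ring)"
proof -
  have "\<exists>y. x + y = 0" for x :: 'a
    using add.right_inverse by blast
  moreover have "x \<noteq> 0 \<Longrightarrow> \<exists>y. x * y = 1" for x :: 'a
    by (rule exI[of _ "inverse x"]) auto
  ultimately show ?thesis
    unfolding fring_def using add.right_inverse
    by unfold_locales (auto simp:algebra_simps Units_def)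
qed

lemma fring_pow: "(x::'a::field) [^]\<^bsub>fring\<^esub> (i::nat) = x ^ i"
proof -
  interpret field "fring :: 'a ring" by (rule field_fring)
  show ?thesis by (induction i) (simp_all add: fring_def)
qed

lemma cyc: "\<exists>g::'a::{field,finite}. g \<noteq> 0 \<and> (\<forall>x. x \<noteq> 0 \<longrightarrow> (\<exists>i::nat. x = g ^ i))"
proof -
  have "finite (carrier (fring :: 'a ring))" by simp
  from field.finite_field_mult_group_has_gen[OF field_fring this]
  obtain a where a: "a \<in> carrier (mult_of (fring :: 'a ring))" and
   c: "carrier (mult_of (fring :: 'a ring)) = {a [^]\<^bsub>(fring :: 'a ring)\<^esub> i |i. i \<in> (UNIV::nat set)}"
    by (elim bexE) (rule that)
  have "a \<noteq> 0" using a by (simp add: fring_def)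
  moreover have "\<forall>x. x \<noteq> 0 \<longrightarrow> (\<exists>i::nat. x = a ^ i)"
  proof (intro allI impI)
    fix x :: 'a assume "x \<noteq> 0"
    hence "x \<in> carrier (mult_of (fring :: 'a ring))" by (simp add: fring_def)
    with c obtain i::nat where "x = a [^]\<^bsub>(fring :: 'a ring)\<^esub> i" by blast
    thus "\<exists>i::nat. x = a ^ i" by (auto simp: nat_pow_mult_of fring_pow)
  qed
  ultimately show ?thesis by blast
qed

locale chars =
  fixes psi :: "'a::{field,finite} \<Rightarrow> complex" and om :: "'a \<Rightarrow> complex"
  assumes psi: "nontriv_add_char psi" and omega: "mult_char_generator om"
begin


lemma psi_add: "psi (x + y) = psi x * psi y" using psi by (simp add: nontriv_add_char_def)
lemma psi_nz: "psi x \<noteq> 0" using psi by (simp add: nontriv_add_char_def)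
lemma psi_0: "psi 0 = 1"
proof -
  from psi_add[of 0 0] have "psi 0 * 1 = psi 0 * psi 0" by simp
  thus ?thesis using psi_nz[of 0] by (metis mult_left_cancel)
qed

lemma psi_sum: "psi (\<Sum>i\<in>A. f i) = (\<Prod>i\<in>A. psi (f i))"
  by (induction A rule: infinite_finite_induct) (simp_all add: psi_0 psi_add)

lemma psi_sum_zero: "(\<Sum>t\<in>UNIV. psi t) = 0"
proof -
  obtain x0 where x0: "psi x0 \<noteq> 1" using psi by (auto simp: nontriv_add_char_def)
  have "(\<Sum>t\<in>UNIV. psi (t + x0)) = (\<Sum>t\<in>UNIV. psi t)"
    by (rule sum.reindex_bij_witness[of _ "\<lambda>t. t - x0" "\<lambda>t. t + x0"]) auto
  hence "(\<Sum>t\<in>UNIV. psi t) * psi x0 = (\<Sum>t\<in>UNIV. psi t) * 1"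
    by (simp add: psi_add sum_distrib_right)
  thus ?thesis using x0 by (metis mult_left_cancel)
qed

lemma psi_lin: "(\<Sum>t\<in>UNIV. psi (t * a)) = (if a = 0 then of_nat CARD('a) else 0)"
proof (cases "a = 0")
  case True thus ?thesis by (simp add: psi_0)
next
  case False
  have "(\<Sum>t\<in>UNIV. psi (t * a)) = (\<Sum>t\<in>UNIV. psi t)"
    by (rule sum.reindex_bij_witness[of _ "\<lambda>u. u / a" "\<lambda>t. t * a"]) (use False in auto)
  thus ?thesis using False psi_sum_zero by simp
qed

lemma om_mult: "x \<noteq> 0 \<Longrightarrow> y \<noteq> 0 \<Longrightarrow> om (x * y) = om x * om y"
  using omega by (simp add: mult_char_generator_def mult_char_def)
lemma om_nz: "x \<noteq> 0 \<Longrightarrow> om x \<noteq> 0"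
  using omega by (simp add: mult_char_generator_def mult_char_def)
lemma om_1: "om 1 = 1"
proof -
  from om_mult[of 1 1] have "om 1 * 1 = om 1 * om 1" by simp
  thus ?thesis using om_nz[of 1] by (metis mult_left_cancel one_neq_zero)
qed
lemma om_pow: "x \<noteq> 0 \<Longrightarrow> om (x ^ k) = om x ^ k"
  by (induction k) (simp_all add: om_1 om_mult)
lemma om_inverse: "x \<noteq> 0 \<Longrightarrow> om (inverse x) = inverse (om x)"
proof -
  assume x: "x \<noteq> 0"
  have "om x * om (inverse x) = 1" using om_mult[of x "inverse x"] x om_1 by simp
  thus ?thesis by (metis inverse_unique)
qed
lemma om_prod: "finite A \<Longrightarrow> (\<And>i. i \<in> A \<Longrightarrow> f i \<noteq> 0) \<Longrightarrow> om (\<Prod>i\<in>A. f i) = (\<Prod>i\<in>A. om (f i))"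
  by (induction A rule: finite_induct) (simp_all add: om_1 om_mult)

lemma card_U: "card {x::'a. x \<noteq> 0} = (CARD('a) - 1)"
proof -
  have "{x::'a. x \<noteq> 0} = UNIV - {0}" by auto
  thus ?thesis by (simp add: card_Diff_singleton)
qed

lemma card_ge2: "CARD('a) \<ge> 2"
proof -
  have "card {0::'a, 1} \<le> CARD('a)" by (rule card_mono) auto
  thus ?thesis by simp
qed

lemma nn_pos: "(CARD('a) - 1) > 0" using card_ge2 by simp

lemma fermat: "(x::'a) \<noteq> 0 \<Longrightarrow> x ^ (CARD('a) - 1) = 1"
proof -
  assume x: "x \<noteq> 0"
  let ?U = "{y::'a. y \<noteq> 0}"
  have "(\<Prod>y\<in>?U. x * y) = (\<Prod>y\<in>?U. y)"
    by (rule prod.reindex_bij_witness[of _ "\<lambda>y. y / x" "\<lambda>y. x * y"]) (use x in auto)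
  hence "x ^ card ?U * (\<Prod>y\<in>?U. y) = 1 * (\<Prod>y\<in>?U. y)"
    by (simp add: prod.distrib)
  moreover have "(\<Prod>y\<in>?U. y) \<noteq> 0" by simp
  ultimately show ?thesis using card_U by (metis mult_right_cancel)
qed

lemma om_root: "x \<noteq> 0 \<Longrightarrow> om x ^ (CARD('a) - 1) = 1"
  using om_pow[of x "CARD('a) - 1"] fermat[of x] om_1 by simp


definition gen :: 'a where "gen = (SOME g. g \<noteq> 0 \<and> (\<forall>x. x \<noteq> 0 \<longrightarrow> (\<exists>i::nat. x = g ^ i)))"

lemma gen_aux: "gen \<noteq> 0 \<and> (\<forall>x. x \<noteq> 0 \<longrightarrow> (\<exists>i::nat. x = gen ^ i))"
proof -
  have "\<exists>g::'a. g \<noteq> 0 \<and> (\<forall>x. x \<noteq> 0 \<longrightarrow> (\<exists>i::nat. x = g ^ i))" by (rule cyc)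
  thus ?thesis unfolding gen_def by (rule someI_ex)
qed

lemma gen: "gen \<noteq> 0" "\<And>x. x \<noteq> 0 \<Longrightarrow> \<exists>i::nat. x = gen ^ i"
  using gen_aux by auto

lemma gen_pow_mod: "gen ^ i = gen ^ (i mod (CARD('a) - 1))"
proof -
  have "gen ^ i = gen ^ ((CARD('a) - 1) * (i div (CARD('a) - 1)) + i mod (CARD('a) - 1))" by simp
  also have "\<dots> = (gen ^ (CARD('a) - 1)) ^ (i div (CARD('a) - 1)) * gen ^ (i mod (CARD('a) - 1))"
    by (simp only: power_add power_mult)
  finally have "gen ^ i = (gen ^ (CARD('a) - 1)) ^ (i div (CARD('a) - 1)) * gen ^ (i mod (CARD('a) - 1))" .
  thus ?thesis using fermat[OF gen(1)] by simp
qed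

lemma gen_ne1: "0 < d \<Longrightarrow> d < CARD('a) - 1 \<Longrightarrow> gen ^ d \<noteq> 1"
proof
  assume d: "0 < d" "d < CARD('a) - 1" and g1: "gen ^ d = 1"
  have "{x::'a. x \<noteq> 0} \<subseteq> (\<lambda>i. gen ^ i) ` {..<d}"
  proof
    fix x :: 'a assume "x \<in> {x. x \<noteq> 0}"
    then obtain i where i: "x = gen ^ i" using gen(2) by auto
    have "gen ^ i = gen ^ (d * (i div d) + i mod d)" by simp
    also have "\<dots> = (gen ^ d) ^ (i div d) * gen ^ (i mod d)" by (simp only: power_add power_mult)
    finally have "gen ^ i = (gen ^ d) ^ (i div d) * gen ^ (i mod d)" .
    hence "x = gen ^ (i mod d)" using g1 i by simp
    thus "x \<in> (\<lambda>i. gen ^ i) ` {..<d}" using d by auto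
  qed
  hence "card {x::'a. x \<noteq> 0} \<le> card ((\<lambda>i. gen ^ i) ` {..<d})" by (rule card_mono[rotated]) auto
  also have "\<dots> \<le> d" using card_image_le[of "{..<d}" "\<lambda>i. gen ^ i"] by simp
  finally show False using card_U d by simp
qed

lemma gen_pow_inj: "i < CARD('a) - 1 \<Longrightarrow> j < CARD('a) - 1 \<Longrightarrow> gen ^ i = gen ^ j \<Longrightarrow> i = j"
proof -
  have *: "gen ^ i = gen ^ j \<Longrightarrow> i < j \<Longrightarrow> j < CARD('a) - 1 \<Longrightarrow> False" for i j
  proof -
    assume e: "gen ^ i = gen ^ j" and ij: "i < j" "j < CARD('a) - 1"
    have "gen ^ j = gen ^ i * gen ^ (j - i)" using ij by (simp add: power_add[symmetric])
    hence "gen ^ i * 1 = gen ^ i * gen ^ (j - i)" using e by simp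
    moreover have "gen ^ i \<noteq> 0" using gen(1) by simp
    ultimately have "gen ^ (j - i) = 1" using mult_left_cancel[of "gen ^ i" 1 "gen ^ (j - i)"] by simp
    thus False using gen_ne1[of "j - i"] ij by simp
  qed
  assume "i < CARD('a) - 1" "j < CARD('a) - 1" "gen ^ i = gen ^ j"
  thus "i = j" using *[of i j] *[of j i] by (cases i j rule: linorder_cases) auto
qed

definition dlog :: "'a \<Rightarrow> nat" where "dlog x = (SOME i. i < CARD('a) - 1 \<and> x = gen ^ i)"

lemma dlog: "x \<noteq> 0 \<Longrightarrow> dlog x < CARD('a) - 1 \<and> x = gen ^ dlog x"
proof -
  assume "x \<noteq> 0"
  then obtain i where "x = gen ^ i" using gen(2) by blast
  hence "i mod (CARD('a) - 1) < CARD('a) - 1 \<and> x = gen ^ (i mod (CARD('a) - 1))"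
    using gen_pow_mod nn_pos by simp
  thus ?thesis unfolding dlog_def by (rule someI)
qed

definition zeta :: complex where "zeta = cis (2 * pi / real (CARD('a) - 1))"

lemma zeta_pow: "zeta ^ k = cis (2 * pi * real k / real (CARD('a) - 1))"
  by (simp add: zeta_def DeMoivre mult_ac)

lemma zeta_root: "zeta ^ (CARD('a) - 1) = 1"
  using nn_pos by (simp add: zeta_pow)

lemma zeta_ne1: "k < CARD('a) - 1 \<Longrightarrow> zeta ^ k = 1 \<Longrightarrow> k = 0"
proof -
  assume k: "k < CARD('a) - 1" "zeta ^ k = 1"
  have inj: "inj_on (\<lambda>k. cis (2 * pi * real k / real (CARD('a) - 1))) {..<CARD('a) - 1}"
    using bij_betw_roots_unity[OF nn_pos] by (simp add: bij_betw_def)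
  have e: "cis (2 * pi * real k / real (CARD('a) - 1)) = cis (2 * pi * real (0::nat) / real (CARD('a) - 1))"
    using k zeta_pow by simp
  show "k = 0" using inj_onD[OF inj e] k nn_pos by simp
qed

lemma zeta_mod: "zeta ^ k = zeta ^ (k mod (CARD('a) - 1))"
proof -
  have "zeta ^ k = zeta ^ ((CARD('a) - 1) * (k div (CARD('a) - 1)) + k mod (CARD('a) - 1))" by simp
  also have "\<dots> = (zeta ^ (CARD('a) - 1)) ^ (k div (CARD('a) - 1)) * zeta ^ (k mod (CARD('a) - 1))"
    by (simp only: power_add power_mult)
  finally have "zeta ^ k = (zeta ^ (CARD('a) - 1)) ^ (k div (CARD('a) - 1)) * zeta ^ (k mod (CARD('a) - 1))" .
  thus ?thesis using zeta_root by simp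
qed

lemma chi_char: "mult_char (\<lambda>x. zeta ^ dlog x)"
  unfolding mult_char_def
proof (intro conjI allI impI)
  fix x y :: 'a assume x: "x \<noteq> 0" and y: "y \<noteq> 0"
  have xy: "x * y \<noteq> 0" using x y by simp
  have "gen ^ dlog (x * y) = gen ^ (dlog x + dlog y)"
  proof -
    have "gen ^ dlog (x * y) = x * y" using dlog[OF xy] by simp
    also have "\<dots> = gen ^ dlog x * gen ^ dlog y" using dlog[OF x] dlog[OF y] by simp
    finally show ?thesis by (simp add: power_add)
  qed
  also have "\<dots> = gen ^ ((dlog x + dlog y) mod (CARD('a) - 1))" by (rule gen_pow_mod)
  finally have "dlog (x * y) = (dlog x + dlog y) mod (CARD('a) - 1)"
    using dlog[OF xy] nn_pos by (intro gen_pow_inj) auto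
  hence "zeta ^ dlog (x * y) = zeta ^ (dlog x + dlog y)" using zeta_mod[of "dlog x + dlog y"] by simp
  thus "zeta ^ dlog (x * y) = zeta ^ dlog x * zeta ^ dlog y" by (simp add: power_add)
next
  fix x :: 'a
  show "zeta ^ dlog x \<noteq> 0" by (simp add: zeta_def)
qed

lemma om_inj: "x \<noteq> 0 \<Longrightarrow> om x = 1 \<Longrightarrow> x = 1"
proof -
  assume x: "x \<noteq> 0" and o: "om x = 1"
  have "\<forall>\<chi>::'a \<Rightarrow> complex. mult_char \<chi> \<longrightarrow> (\<exists>k::nat. \<forall>x. x \<noteq> 0 \<longrightarrow> \<chi> x = om x ^ k)"
    using omega unfolding mult_char_generator_def by (rule conjunct2)
  from this[rule_format, OF chi_char]
  obtain k where k: "\<forall>y. y \<noteq> 0 \<longrightarrow> zeta ^ dlog y = om y ^ k" by blast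
  have "zeta ^ dlog x = 1" using k x o by simp
  hence "dlog x = 0" using zeta_ne1 dlog[OF x] by blast
  thus "x = 1" using dlog[OF x] by simp
qed

lemma om_gen_ne1: "0 < d \<Longrightarrow> d < CARD('a) - 1 \<Longrightarrow> om gen ^ d \<noteq> 1"
  using om_inj[of "gen ^ d"] gen_ne1[of d] gen(1) om_pow[of gen d] by auto


lemma root_powi: "(z::complex) ^ (CARD('a) - 1) = 1 \<Longrightarrow> z powi k = z ^ nat (k mod int (CARD('a) - 1))"
proof -
  assume z: "z ^ (CARD('a) - 1) = 1"
  have z0: "z \<noteq> 0" using z nn_pos by (metis power_0_left zero_neq_one not_gr0)
  let ?n = "int (CARD('a) - 1)"
  have "z powi k = z powi (?n * (k div ?n) + k mod ?n)" by simp
  also have "\<dots> = z powi (?n * (k div ?n)) * z powi (k mod ?n)"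
    by (rule power_int_add) (use z0 in blast)
  also have "z powi (?n * (k div ?n)) = (z powi ?n) powi (k div ?n)" by (rule power_int_mult)
  also have "z powi ?n = 1" by (simp only: power_int_of_nat z)
  also have "z powi (k mod ?n) = z ^ nat (k mod ?n)"
    using nn_pos by (simp add: power_int_def)
  finally show ?thesis by simp
qed

lemma om_powi_mod: "x \<noteq> 0 \<Longrightarrow> om x powi k = om x ^ nat (k mod int (CARD('a) - 1))"
  using root_powi om_root by blast

lemma orth_m: "x \<noteq> 0 \<Longrightarrow> (\<Sum>m<CARD('a) - 1. om x ^ m) = (if x = 1 then of_nat (CARD('a) - 1) else 0)"
proof -
  assume x: "x \<noteq> 0"
  show ?thesis
  proof (cases "x = 1")
    case True thus ?thesis by (simp add: om_1)
  next
    case False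
    hence "om x \<noteq> 1" using om_inj x by blast
    hence "(\<Sum>m<CARD('a) - 1. om x ^ m) = (om x ^ (CARD('a) - 1) - 1) / (om x - 1)"
      by (rule geometric_sum)
    thus ?thesis using om_root[OF x] False by simp
  qed
qed

lemma orth_x: "(\<Sum>x\<in>{x::'a. x \<noteq> 0}. om x powi k) = (if int (CARD('a) - 1) dvd k then of_nat (CARD('a) - 1) else 0)"
proof (cases "int (CARD('a) - 1) dvd k")
  case True
  hence "\<And>x. x \<in> {x::'a. x \<noteq> 0} \<Longrightarrow> om x powi k = 1"
    using om_powi_mod by simp
  hence "(\<Sum>x\<in>{x::'a. x \<noteq> 0}. om x powi k) = (\<Sum>x\<in>{x::'a. x \<noteq> 0}. 1)" by (rule sum.cong[OF refl])
  thus ?thesis using True card_U by simp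
next
  case False
  let ?S = "\<Sum>x\<in>{x::'a. x \<noteq> 0}. om x powi k"
  have "?S = (\<Sum>x\<in>{x::'a. x \<noteq> 0}. om (gen * x) powi k)"
    by (rule sum.reindex_bij_witness[of _ "\<lambda>x. gen * x" "\<lambda>y. y / gen"]) (use gen(1) in auto)
  also have "\<dots> = (\<Sum>x\<in>{x::'a. x \<noteq> 0}. om gen powi k * om x powi k)"
    by (rule sum.cong[OF refl]) (use gen(1) in \<open>simp add: om_mult power_int_mult_distrib\<close>)
  also have "\<dots> = om gen powi k * ?S" by (simp add: sum_distrib_left)
  finally have e: "?S * 1 = ?S * om gen powi k" by simp
  have eqk: "om gen powi k = om gen ^ nat (k mod int (CARD('a) - 1))" using om_powi_mod gen(1) by blast
  have np: "int (CARD('a) - 1) > 0" using nn_pos by simp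
  have m1: "k mod int (CARD('a) - 1) \<noteq> 0" using False by (simp add: dvd_eq_mod_eq_0)
  have m2: "k mod int (CARD('a) - 1) \<ge> 0" using pos_mod_sign[OF np] by blast
  have m3: "k mod int (CARD('a) - 1) < int (CARD('a) - 1)" using pos_mod_bound[OF np] by blast
  have "0 < nat (k mod int (CARD('a) - 1))" using m1 m2 by linarith
  moreover have "nat (k mod int (CARD('a) - 1)) < CARD('a) - 1" using m2 m3 by linarith
  ultimately have "om gen ^ nat (k mod int (CARD('a) - 1)) \<noteq> 1" by (rule om_gen_ne1)
  hence "om gen powi k \<noteq> 1" using eqk by simp
  moreover from e have "?S * (1 - om gen powi k) = 0" by (simp add: algebra_simps)
  ultimately have "?S = 0" by simp
  thus ?thesis using False by simp
qed

lemma gauss_mod: "k mod int (CARD('a) - 1) = k' mod int (CARD('a) - 1) \<Longrightarrow> gauss om psi k = gauss om psi k'"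
  unfolding gauss_def by (rule sum.cong[OF refl]) (simp add: om_powi_mod)

lemma gauss_dvd: "int (CARD('a) - 1) dvd k \<Longrightarrow> gauss om psi k = -1"
proof -
  assume k: "int (CARD('a) - 1) dvd k"
  have g1: "gauss om psi k = (\<Sum>x\<in>{x::'a. x \<noteq> 0}. psi x)"
    unfolding gauss_def by (rule sum.cong[OF refl]) (use k in \<open>simp add: om_powi_mod\<close>)
  have u: "UNIV = insert (0::'a) {x. x \<noteq> 0}" by auto
  have "(\<Sum>t\<in>UNIV. psi t) = psi 0 + (\<Sum>x\<in>{x::'a. x \<noteq> 0}. psi x)"
    by (subst u, subst sum.insert) auto
  hence "(\<Sum>x\<in>{x::'a. x \<noteq> 0}. psi x) = -1" using psi_sum_zero psi_0 by (simp add: add_eq_0_iff)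
  thus ?thesis using g1 by simp
qed

definition KK :: "'a \<Rightarrow> int \<Rightarrow> complex" where
  "KK t k = (\<Sum>u\<in>{u::'a. u \<noteq> 0}. psi (t * u) * om u powi k)"

lemma KK0: "KK 0 k = (if int (CARD('a) - 1) dvd k then of_nat (CARD('a) - 1) else 0)"
  unfolding KK_def using orth_x by (simp add: psi_0)

lemma KKt: "t \<noteq> 0 \<Longrightarrow> KK t k = om t powi (-k) * gauss om psi k"
proof -
  assume t: "t \<noteq> 0"
  have "KK t k = (\<Sum>v\<in>{v::'a. v \<noteq> 0}. psi v * om (v / t) powi k)"
    unfolding KK_def
    by (rule sum.reindex_bij_witness[of _ "\<lambda>v. v / t" "\<lambda>u. t * u"]) (use t in auto)
  also have "\<dots> = (\<Sum>v\<in>{v::'a. v \<noteq> 0}. om t powi (-k) * (om v powi k * psi v))"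
  proof (rule sum.cong[OF refl])
    fix v :: 'a assume v: "v \<in> {v. v \<noteq> 0}"
    have "om (v / t) = om v * inverse (om t)"
      using v t by (simp add: divide_inverse om_mult om_inverse)
    thus "psi v * om (v / t) powi k = om t powi (-k) * (om v powi k * psi v)"
      by (simp add: power_int_mult_distrib power_int_minus power_int_inverse)
  qed
  also have "\<dots> = om t powi (-k) * gauss om psi k"
    unfolding gauss_def by (simp add: sum_distrib_left)
  finally show ?thesis .
qed

lemma om_pow_powi: "(om x ^ e) ^ m = om x powi (int e * int m)"
  by (simp add: power_mult of_nat_mult[symmetric] del: of_nat_mult)

lemma om_pow_powi_neg: "x \<noteq> 0 \<Longrightarrow> inverse (om x ^ e) ^ m = om x powi (- (int e * int m))"
  by (simp add: power_int_minus om_pow_powi[symmetric] power_inverse)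

lemma powi_prod: "z \<noteq> 0 \<Longrightarrow> (\<Prod>i\<in>A. (z::complex) powi e i) = z powi (\<Sum>i\<in>A. e i)"
  by (induction A rule: infinite_finite_induct) (simp_all add: power_int_add)

lemma indicator_point:
  fixes X Y :: "nat set" and p qq :: "nat \<Rightarrow> nat" and a :: nat and lam :: 'a
    and x y :: "nat \<Rightarrow> 'a" and z :: 'a
  assumes fin: "finite X" "finite Y" and lam: "lam \<noteq> 0"
    and x: "\<And>i. i \<in> X \<Longrightarrow> x i \<noteq> 0" and y: "\<And>j. j \<in> Y \<Longrightarrow> y j \<noteq> 0" and z: "z \<noteq> 0"
  shows "(if (\<Sum>i\<in>X. x i) = (\<Sum>j\<in>Y. y j) \<and> lam * z ^ a * (\<Prod>i\<in>X. x i ^ p i) = (\<Prod>j\<in>Y. y j ^ qq j)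
          then 1 else 0)
   = 1 / (of_nat CARD('a) * of_nat (CARD('a) - 1)) *
     (\<Sum>t\<in>UNIV. \<Sum>m<CARD('a) - 1. om lam ^ m
        * (\<Prod>i\<in>X. psi (t * x i) * om (x i) powi (int (p i) * int m))
        * (\<Prod>j\<in>Y. psi ((- t) * y j) * om (y j) powi (- (int (qq j) * int m)))
        * om z powi (int a * int m))"
proof -
  define A where "A = (\<Sum>i\<in>X. x i) - (\<Sum>j\<in>Y. y j)"
  define w where "w = lam * z ^ a * (\<Prod>i\<in>X. x i ^ p i) * inverse (\<Prod>j\<in>Y. y j ^ qq j)"
  have Py: "(\<Prod>j\<in>Y. y j ^ qq j) \<noteq> 0" using y fin by simp
  have Px: "(\<Prod>i\<in>X. x i ^ p i) \<noteq> 0" using x fin by simp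
  have w0: "w \<noteq> 0" unfolding w_def using Px Py lam z by simp
  have weq: "(lam * z ^ a * (\<Prod>i\<in>X. x i ^ p i) = (\<Prod>j\<in>Y. y j ^ qq j)) \<longleftrightarrow> w = 1"
    unfolding w_def using Py by (simp add: field_simps)
  have I1: "(if (\<Sum>i\<in>X. x i) = (\<Sum>j\<in>Y. y j) then 1 else 0) = 1 / of_nat CARD('a) * (\<Sum>t\<in>UNIV. psi (t * A))"
    using psi_lin[of A] card_ge2 by (simp add: A_def)
  have I2: "(if w = 1 then 1 else 0) = 1 / of_nat (CARD('a) - 1) * (\<Sum>m<CARD('a) - 1. om w ^ m)"
    using orth_m[OF w0] nn_pos by simp
  have split: "(if (\<Sum>i\<in>X. x i) = (\<Sum>j\<in>Y. y j) \<and> lam * z ^ a * (\<Prod>i\<in>X. x i ^ p i) = (\<Prod>j\<in>Y. y j ^ qq j)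
          then 1 else (0::complex)) = (if (\<Sum>i\<in>X. x i) = (\<Sum>j\<in>Y. y j) then 1 else 0) * (if w = 1 then 1 else 0)"
    using weq by simp
  have psiA: "psi (t * A) = (\<Prod>i\<in>X. psi (t * x i)) * (\<Prod>j\<in>Y. psi ((- t) * y j))" for t
  proof -
    have "t * A = (\<Sum>i\<in>X. t * x i) + (\<Sum>j\<in>Y. (- t) * y j)"
      unfolding A_def by (simp add: sum_distrib_left right_diff_distrib sum_negf)
    thus ?thesis by (simp add: psi_add psi_sum)
  qed
  have omw: "om w ^ m = om lam ^ m * om z powi (int a * int m)
      * (\<Prod>i\<in>X. om (x i) powi (int (p i) * int m)) * (\<Prod>j\<in>Y. om (y j) powi (- (int (qq j) * int m)))" for m
  proof -
    have "om w = om lam * om z ^ a * (\<Prod>i\<in>X. om (x i) ^ p i) * inverse (\<Prod>j\<in>Y. om (y j) ^ qq j)"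
    proof -
      have "om w = om lam * om (z ^ a) * om (\<Prod>i\<in>X. x i ^ p i) * om (inverse (\<Prod>j\<in>Y. y j ^ qq j))"
        unfolding w_def using lam z Px Py by (simp add: om_mult)
      also have "om (\<Prod>i\<in>X. x i ^ p i) = (\<Prod>i\<in>X. om (x i) ^ p i)"
        using fin x by (simp add: om_prod om_pow)
      also have "om (inverse (\<Prod>j\<in>Y. y j ^ qq j)) = inverse (\<Prod>j\<in>Y. om (y j) ^ qq j)"
        using fin y Py by (simp add: om_inverse om_prod om_pow)
      finally show ?thesis using z by (simp add: om_pow)
    qed
    hence "om w ^ m = om lam ^ m * (om z ^ a) ^ m * (\<Prod>i\<in>X. (om (x i) ^ p i) ^ m)
        * (\<Prod>j\<in>Y. inverse (om (y j) ^ qq j) ^ m)"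
      by (simp add: power_mult_distrib prod_power_distrib prod_inversef[symmetric] power_inverse)
    also have "(\<Prod>j\<in>Y. inverse (om (y j) ^ qq j) ^ m) = (\<Prod>j\<in>Y. om (y j) powi (- (int (qq j) * int m)))"
      by (rule prod.cong[OF refl]) (use y in \<open>simp add: om_pow_powi_neg\<close>)
    finally show ?thesis by (simp add: om_pow_powi mult_ac)
  qed
  have "(if (\<Sum>i\<in>X. x i) = (\<Sum>j\<in>Y. y j) \<and> lam * z ^ a * (\<Prod>i\<in>X. x i ^ p i) = (\<Prod>j\<in>Y. y j ^ qq j)
          then 1 else 0)
     = 1 / (of_nat CARD('a) * of_nat (CARD('a) - 1)) * ((\<Sum>t\<in>UNIV. psi (t * A)) * (\<Sum>m<CARD('a) - 1. om w ^ m))"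
    unfolding split I1 I2 by simp
  also have "(\<Sum>t\<in>UNIV. psi (t * A)) * (\<Sum>m<CARD('a) - 1. om w ^ m)
      = (\<Sum>t\<in>UNIV. \<Sum>m<CARD('a) - 1. psi (t * A) * om w ^ m)"
    by (simp add: sum_product)
  also have "\<dots> = (\<Sum>t\<in>UNIV. \<Sum>m<CARD('a) - 1. om lam ^ m
        * (\<Prod>i\<in>X. psi (t * x i) * om (x i) powi (int (p i) * int m))
        * (\<Prod>j\<in>Y. psi ((- t) * y j) * om (y j) powi (- (int (qq j) * int m)))
        * om z powi (int a * int m))"
    by (simp add: psiA omw prod.distrib mult_ac)
  finally show ?thesis .
qed

lemma sum_triple:
  fixes f g h :: "_ \<Rightarrow> complex"
  assumes "finite A" "finite B" "finite C"
  shows "(\<Sum>d\<in>A \<times> B \<times> C. c * f (fst d) * g (fst (snd d)) * h (snd (snd d)))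
       = c * sum f A * sum g B * sum h C"
proof -
  have "(\<Sum>d\<in>A \<times> B \<times> C. c * f (fst d) * g (fst (snd d)) * h (snd (snd d)))
      = (\<Sum>x\<in>A. \<Sum>e\<in>B \<times> C. c * f x * g (fst e) * h (snd e))"
    by (subst sum.cartesian_product') simp
  also have "\<dots> = (\<Sum>x\<in>A. \<Sum>y\<in>B. \<Sum>z\<in>C. c * f x * g y * h z)"
    by (subst sum.cartesian_product') simp
  also have "\<dots> = c * sum f A * sum g B * sum h C"
    by (simp add: sum_distrib_left sum_distrib_right mult_ac)
  finally show ?thesis .
qed

lemma KK0_prod_zero:
  fixes X Y :: "nat set" and p qq :: "nat \<Rightarrow> nat" and a m :: nat
  assumes fin: "finite X" "finite Y"
    and gcd1: "Gcd (insert a (p ` X \<union> qq ` Y)) = 1"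
    and m: "0 < m" "m < CARD('a) - 1"
  shows "(\<Prod>i\<in>X. KK 0 (int (p i) * int m)) * (\<Prod>j\<in>Y. KK 0 (- (int (qq j) * int m))) * KK 0 (int a * int m) = 0"
proof (rule ccontr)
  assume ne: "\<not> ?thesis"
  let ?n = "CARD('a) - 1"
  have dc: "int (CARD('a) - 1) dvd int k * int m \<longleftrightarrow> ?n dvd k * m" for k
    by (simp only: of_nat_mult[symmetric] int_dvd_int_iff)
  have dc': "int (CARD('a) - 1) dvd - (int k * int m) \<longleftrightarrow> ?n dvd k * m" for k
    by (simp only: dvd_minus_iff dc)
  have kk: "KK 0 k \<noteq> 0 \<Longrightarrow> int (CARD('a) - 1) dvd k" for k
    by (cases "int (CARD('a) - 1) dvd k") (simp_all only: KK0 if_True if_False not_True_eq_False simp_thms)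
  have d1: "?n dvd a * m"
    using ne kk[of "int a * int m"] dc by auto
  have d2: "?n dvd p i * m" if "i \<in> X" for i
  proof -
    have "KK 0 (int (p i) * int m) \<noteq> 0" using ne fin that by auto
    thus ?thesis using kk dc by blast
  qed
  have d3: "?n dvd qq j * m" if "j \<in> Y" for j
  proof -
    have "KK 0 (- (int (qq j) * int m)) \<noteq> 0" using ne fin that by auto
    thus ?thesis using kk dc' by blast
  qed
  have "?n dvd Gcd ((\<lambda>d. m * d) ` insert a (p ` X \<union> qq ` Y))"
    by (rule Gcd_greatest) (use d1 d2 d3 in \<open>auto simp: mult.commute\<close>)
  also have "Gcd ((\<lambda>d. m * d) ` insert a (p ` X \<union> qq ` Y)) = m"
    using Gcd_mult[of m "insert a (p ` X \<union> qq ` Y)"] gcd1 by simp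
  finally have "?n dvd m" .
  thus False using m by (simp add: nat_dvd_not_less)
qed

lemma E0:
  fixes X Y :: "nat set" and p qq :: "nat \<Rightarrow> nat" and a m :: nat
  assumes fin: "finite X" "finite Y"
    and gcd1: "Gcd (insert a (p ` X \<union> qq ` Y)) = 1"
    and m: "m < CARD('a) - 1"
  shows "om lam ^ m * (\<Prod>i\<in>X. KK 0 (int (p i) * int m)) * (\<Prod>j\<in>Y. KK (- 0) (- (int (qq j) * int m)))
         * KK 0 (int a * int m) = (if m = 0 then of_nat (CARD('a) - 1) ^ (card X + card Y + 1) else 0)"
proof (cases "m = 0")
  case True thus ?thesis by (simp add: KK0 power_add)
next
  case False
  thus ?thesis using KK0_prod_zero[OF fin gcd1, of m] m by simp
qed

lemma Et:
  fixes X Y :: "nat set" and p qq :: "nat \<Rightarrow> nat" and a m :: nat and lam t :: 'a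
  assumes fin: "finite X" "finite Y" and lam: "lam \<noteq> 0" and t: "t \<noteq> 0"
    and adv: "int a dvd (int (\<Sum>i\<in>X. p i) - int (\<Sum>j\<in>Y. qq j))"
  shows "om lam ^ m * (\<Prod>i\<in>X. KK t (int (p i) * int m)) * (\<Prod>j\<in>Y. KK (- t) (- (int (qq j) * int m)))
         * KK 0 (int a * int m)
       = of_nat (CARD('a) - 1) * ((if int (CARD('a) - 1) dvd int a * int m then 1 else 0)
          * (\<Prod>i\<in>X. gauss om psi (int (p i) * int m)) * (\<Prod>j\<in>Y. gauss om psi (- (int (qq j) * int m)))
          * om ((-1) ^ (\<Sum>j\<in>Y. qq j) * lam) ^ m)"
proof (cases "int (CARD('a) - 1) dvd int a * int m")
  case False thus ?thesis by (simp add: KK0)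
next
  case True
  let ?PX = "int (\<Sum>i\<in>X. p i)" and ?QY = "int (\<Sum>j\<in>Y. qq j)"
  have mt: "- t \<noteq> 0" using t by simp
  have omt: "om t \<noteq> 0" using om_nz t by blast
  have om1: "om (-1) \<noteq> 0" using om_nz by simp
  have X1: "(\<Prod>i\<in>X. KK t (int (p i) * int m))
        = om t powi (- (?PX * int m)) * (\<Prod>i\<in>X. gauss om psi (int (p i) * int m))"
  proof -
    have "(\<Prod>i\<in>X. KK t (int (p i) * int m))
        = (\<Prod>i\<in>X. om t powi (- (int (p i) * int m))) * (\<Prod>i\<in>X. gauss om psi (int (p i) * int m))"
      by (simp add: KKt[OF t] prod.distrib)
    also have "(\<Prod>i\<in>X. om t powi (- (int (p i) * int m))) = om t powi (- (?PX * int m))"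
      by (simp add: powi_prod[OF omt] sum_negf sum_distrib_right)
    finally show ?thesis .
  qed
  have Y1: "(\<Prod>j\<in>Y. KK (- t) (- (int (qq j) * int m)))
        = om (-1) powi (?QY * int m) * om t powi (?QY * int m) * (\<Prod>j\<in>Y. gauss om psi (- (int (qq j) * int m)))"
  proof -
    have "(\<Prod>j\<in>Y. KK (- t) (- (int (qq j) * int m)))
        = (\<Prod>j\<in>Y. om (- t) powi (int (qq j) * int m)) * (\<Prod>j\<in>Y. gauss om psi (- (int (qq j) * int m)))"
      by (simp add: KKt[OF mt] prod.distrib)
    also have "(\<Prod>j\<in>Y. om (- t) powi (int (qq j) * int m)) = om (- t) powi (?QY * int m)"
      using om_nz[OF mt] by (simp add: powi_prod sum_distrib_right)
    also have "om (- t) = om (-1) * om t" using om_mult[of "-1" t] t by simp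
    finally show ?thesis by (simp add: power_int_mult_distrib)
  qed
  have cancel: "om t powi (- (?PX * int m)) * om t powi (?QY * int m) = 1"
  proof -
    have "om t powi (- (?PX * int m)) * om t powi (?QY * int m) = om t powi ((?QY - ?PX) * int m)"
      using omt by (simp add: power_int_add[symmetric] algebra_simps)
    also have "int (CARD('a) - 1) dvd (?QY - ?PX) * int m"
    proof -
      obtain e where e: "?PX - ?QY = int a * e" using adv by (auto elim: dvdE)
      have "(?QY - ?PX) * int m = (int a * int m) * (- e)" using e by (simp add: algebra_simps)
      thus ?thesis using True by simp
    qed
    hence "om t powi ((?QY - ?PX) * int m) = 1"
      using om_powi_mod[OF t] by (simp add: dvd_eq_mod_eq_0)
    finally show ?thesis .
  qed
  have lamm: "om ((-1) ^ (\<Sum>j\<in>Y. qq j) * lam) ^ m = om (-1) powi (?QY * int m) * om lam ^ m"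
  proof -
    have "om ((-1) ^ (\<Sum>j\<in>Y. qq j) * lam) = om (-1) ^ (\<Sum>j\<in>Y. qq j) * om lam"
      using lam by (simp add: om_mult om_pow)
    thus ?thesis by (simp add: power_mult_distrib om_pow_powi)
  qed
  show ?thesis
    unfolding X1 Y1 lamm using True cancel
    by (simp add: KK0 mult_ac)
qed

lemma charsum_count:
  fixes X Y :: "nat set" and p qq :: "nat \<Rightarrow> nat" and a :: nat and lam :: 'a
  assumes fin: "finite X" "finite Y" and lam: "lam \<noteq> 0"
    and adv: "int a dvd (int (\<Sum>i\<in>X. p i) - int (\<Sum>j\<in>Y. qq j))"
    and gcd1: "Gcd (insert a (p ` X \<union> qq ` Y)) = 1"
  shows "of_nat (card {(xv, yv, z). xv \<in> (X \<rightarrow>\<^sub>E {x::'a. x \<noteq> 0}) \<and> yv \<in> (Y \<rightarrow>\<^sub>E {y. y \<noteq> 0}) \<and> z \<noteq> 0 \<and>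
            (\<Sum>i\<in>X. xv i) = (\<Sum>j\<in>Y. yv j) \<and> lam * z ^ a * (\<Prod>i\<in>X. xv i ^ p i) = (\<Prod>j\<in>Y. yv j ^ qq j)})
   = of_nat (CARD('a) - 1) ^ (card X + card Y) / of_nat CARD('a)
     + of_nat (CARD('a) - 1) / of_nat CARD('a) * (\<Sum>m<CARD('a) - 1.
        (if int (CARD('a) - 1) dvd int a * int m then 1 else 0)
          * (\<Prod>i\<in>X. gauss om psi (int (p i) * int m)) * (\<Prod>j\<in>Y. gauss om psi (- (int (qq j) * int m)))
          * om ((-1) ^ (\<Sum>j\<in>Y. qq j) * lam) ^ m)"
proof -
  let ?U = "{x::'a. x \<noteq> 0}"
  let ?D = "(X \<rightarrow>\<^sub>E ?U) \<times> (Y \<rightarrow>\<^sub>E ?U) \<times> ?U"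
  let ?n = "CARD('a) - 1" and ?q = "CARD('a)"
  define P where "P = (\<lambda>(xv::nat \<Rightarrow> 'a, yv::nat \<Rightarrow> 'a, z::'a). (\<Sum>i\<in>X. xv i) = (\<Sum>j\<in>Y. yv j) \<and>
      lam * z ^ a * (\<Prod>i\<in>X. xv i ^ p i) = (\<Prod>j\<in>Y. yv j ^ qq j))"
  define R where "R = (\<lambda>m. (if int (CARD('a) - 1) dvd int a * int m then 1 else 0)
          * (\<Prod>i\<in>X. gauss om psi (int (p i) * int m)) * (\<Prod>j\<in>Y. gauss om psi (- (int (qq j) * int m)))
          * om ((-1) ^ (\<Sum>j\<in>Y. qq j) * lam) ^ m)"
  define T where "T = (\<lambda>t m (d :: (nat \<Rightarrow> 'a) \<times> (nat \<Rightarrow> 'a) \<times> 'a). om lam ^ m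
        * (\<Prod>i\<in>X. psi (t * fst d i) * om (fst d i) powi (int (p i) * int m))
        * (\<Prod>j\<in>Y. psi ((- t) * fst (snd d) j) * om (fst (snd d) j) powi (- (int (qq j) * int m)))
        * om (snd (snd d)) powi (int a * int m))"
  define E where "E = (\<lambda>t m. om lam ^ m * (\<Prod>i\<in>X. KK t (int (p i) * int m))
        * (\<Prod>j\<in>Y. KK (- t) (- (int (qq j) * int m))) * KK 0 (int a * int m))"
  have finD: "finite ?D" using fin by (simp add: finite_PiE)
  have set: "{(xv, yv, z). xv \<in> (X \<rightarrow>\<^sub>E ?U) \<and> yv \<in> (Y \<rightarrow>\<^sub>E {y. y \<noteq> 0}) \<and> z \<noteq> 0 \<and>
            (\<Sum>i\<in>X. xv i) = (\<Sum>j\<in>Y. yv j) \<and> lam * z ^ a * (\<Prod>i\<in>X. xv i ^ p i) = (\<Prod>j\<in>Y. yv j ^ qq j)}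
        = {d \<in> ?D. P d}"
    by (auto simp: P_def)
  have "of_nat (card {d \<in> ?D. P d}) = (\<Sum>d\<in>?D. if P d then 1 else (0::complex))"
    using finD by (simp add: sum.inter_filter[symmetric])
  also have "\<dots> = (\<Sum>d\<in>?D. 1 / (of_nat ?q * of_nat ?n) * (\<Sum>t\<in>UNIV. \<Sum>m<?n. T t m d))"
  proof (rule sum.cong[OF refl])
    fix d assume d: "d \<in> ?D"
    obtain xv yv z where dd: "d = (xv, yv, z)" by (cases d)
    have xv: "\<And>i. i \<in> X \<Longrightarrow> xv i \<noteq> 0" and yv: "\<And>j. j \<in> Y \<Longrightarrow> yv j \<noteq> 0" and z: "z \<noteq> 0"
      using d dd by (auto simp: PiE_def Pi_def)
    show "(if P d then 1 else 0) = 1 / (of_nat ?q * of_nat ?n) * (\<Sum>t\<in>UNIV. \<Sum>m<?n. T t m d)"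
      unfolding dd P_def T_def using indicator_point[OF fin lam xv yv z, where p=p and qq=qq and a=a] by simp
  qed
  also have "\<dots> = 1 / (of_nat ?q * of_nat ?n) * (\<Sum>t\<in>UNIV. \<Sum>m<?n. \<Sum>d\<in>?D. T t m d)"
  proof -
    have "(\<Sum>d\<in>?D. 1 / (of_nat ?q * of_nat ?n) * (\<Sum>t\<in>UNIV. \<Sum>m<?n. T t m d))
        = 1 / (of_nat ?q * of_nat ?n) * (\<Sum>d\<in>?D. \<Sum>t\<in>UNIV. \<Sum>m<?n. T t m d)"
      by (rule sum_distrib_left[symmetric])
    also have "(\<Sum>d\<in>?D. \<Sum>t\<in>UNIV. \<Sum>m<?n. T t m d) = (\<Sum>t\<in>UNIV. \<Sum>d\<in>?D. \<Sum>m<?n. T t m d)"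
      by (rule sum.swap)
    also have "\<dots> = (\<Sum>t\<in>UNIV. \<Sum>m<?n. \<Sum>d\<in>?D. T t m d)"
      by (rule sum.cong[OF refl], rule sum.swap)
    finally show ?thesis .
  qed
  also have "(\<lambda>t m. \<Sum>d\<in>?D. T t m d) = E"
  proof (intro ext)
    fix t m
    have "(\<Sum>d\<in>?D. T t m d) = om lam ^ m
        * (\<Sum>xv\<in>X \<rightarrow>\<^sub>E ?U. \<Prod>i\<in>X. psi (t * xv i) * om (xv i) powi (int (p i) * int m))
        * (\<Sum>yv\<in>Y \<rightarrow>\<^sub>E ?U. \<Prod>j\<in>Y. psi ((- t) * yv j) * om (yv j) powi (- (int (qq j) * int m)))
        * (\<Sum>z\<in>?U. om z powi (int a * int m))"
      unfolding T_def by (rule sum_triple) (use fin in \<open>simp_all add: finite_PiE\<close>)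
    also have "(\<Sum>xv\<in>X \<rightarrow>\<^sub>E ?U. \<Prod>i\<in>X. psi (t * xv i) * om (xv i) powi (int (p i) * int m))
        = (\<Prod>i\<in>X. KK t (int (p i) * int m))"
      unfolding KK_def by (rule prod_sum_PiE[symmetric]) (use fin in auto)
    also have "(\<Sum>yv\<in>Y \<rightarrow>\<^sub>E ?U. \<Prod>j\<in>Y. psi ((- t) * yv j) * om (yv j) powi (- (int (qq j) * int m)))
        = (\<Prod>j\<in>Y. KK (- t) (- (int (qq j) * int m)))"
      unfolding KK_def by (rule prod_sum_PiE[symmetric]) (use fin in auto)
    also have "(\<Sum>z\<in>?U. om z powi (int a * int m)) = KK 0 (int a * int m)"
      unfolding KK_def by (simp add: psi_0)
    finally show "(\<Sum>d\<in>?D. T t m d) = E t m" unfolding E_def .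
  qed
  also have "(\<Sum>t\<in>UNIV. \<Sum>m<?n. E t m) = (\<Sum>m<?n. \<Sum>t\<in>UNIV. E t m)" by (rule sum.swap)
  also have "\<dots> = (\<Sum>m<?n. E 0 m + of_nat ?n * (of_nat ?n * R m))"
  proof (rule sum.cong[OF refl])
    fix m assume m: "m \<in> {..<?n}"
    have u: "UNIV = insert (0::'a) ?U" by auto
    have "(\<Sum>t\<in>UNIV. E t m) = E 0 m + (\<Sum>t\<in>?U. E t m)"
      by (subst u, subst sum.insert) auto
    also have "(\<Sum>t\<in>?U. E t m) = (\<Sum>t\<in>?U. of_nat ?n * R m)"
      by (rule sum.cong[OF refl]) (use Et[OF fin lam _ adv] in \<open>simp add: E_def R_def\<close>)
    also have "\<dots> = of_nat ?n * (of_nat ?n * R m)" using card_U by simp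
    finally show "(\<Sum>t\<in>UNIV. E t m) = E 0 m + of_nat ?n * (of_nat ?n * R m)" .
  qed
  also have "\<dots> = (\<Sum>m<?n. E 0 m) + of_nat ?n * (of_nat ?n * (\<Sum>m<?n. R m))"
    by (simp add: sum.distrib sum_distrib_left)
  also have "(\<Sum>m<?n. E 0 m) = (\<Sum>m<?n. if m = 0 then of_nat ?n ^ (card X + card Y + 1) else 0)"
    by (rule sum.cong[OF refl]) (use E0[OF fin gcd1] in \<open>simp add: E_def\<close>)
  also have "\<dots> = of_nat ?n ^ (card X + card Y + 1)" using nn_pos by simp
  finally have main: "of_nat (card {d \<in> ?D. P d}) = 1 / (of_nat ?q * of_nat ?n) *
      (of_nat ?n ^ (card X + card Y + 1) + of_nat ?n * (of_nat ?n * (\<Sum>m<?n. R m)))" .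
  have n0: "(of_nat ?n :: complex) \<noteq> 0" using nn_pos by simp
  have q0: "(of_nat ?q :: complex) \<noteq> 0" by simp
  show ?thesis
    unfolding set main R_def[symmetric] using n0 q0
    by (simp add: field_simps power_add)
qed

definition scl :: "nat set \<Rightarrow> nat set \<Rightarrow> int \<Rightarrow> 'a \<Rightarrow> (nat \<Rightarrow> 'a) \<times> (nat \<Rightarrow> 'a) \<times> 'a
    \<Rightarrow> (nat \<Rightarrow> 'a) \<times> (nat \<Rightarrow> 'a) \<times> 'a" where
  "scl X Y e s d = (restrict (\<lambda>i. s * fst d i) X, restrict (\<lambda>j. s * fst (snd d) j) Y, snd (snd d) * s powi (- e))"

lemma scl_comp: "scl X Y e s (scl X Y e t d) = scl X Y e (s * t) d"
  unfolding scl_def by (auto simp: restrict_def fun_eq_iff power_int_mult_distrib mult_ac)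

lemma scl_1: "fst d \<in> X \<rightarrow>\<^sub>E A \<Longrightarrow> fst (snd d) \<in> Y \<rightarrow>\<^sub>E B \<Longrightarrow> scl X Y e 1 d = d"
  unfolding scl_def by (cases d) simp

lemma scl_mem:
  fixes X Y :: "nat set" and p qq :: "nat \<Rightarrow> nat" and a :: nat and lam s :: 'a and e :: int
  assumes fin: "finite X" "finite Y" and s: "s \<noteq> 0"
    and e: "int (\<Sum>i\<in>X. p i) - int (\<Sum>j\<in>Y. qq j) = int a * e"
    and d: "d \<in> {(xv, yv, z). xv \<in> (X \<rightarrow>\<^sub>E {x::'a. x \<noteq> 0}) \<and> yv \<in> (Y \<rightarrow>\<^sub>E {y. y \<noteq> 0}) \<and> z \<noteq> 0 \<and>
            (\<Sum>i\<in>X. xv i) = (\<Sum>j\<in>Y. yv j) \<and> lam * z ^ a * (\<Prod>i\<in>X. xv i ^ p i) = (\<Prod>j\<in>Y. yv j ^ qq j)}"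
  shows "scl X Y e s d \<in> {(xv, yv, z). xv \<in> (X \<rightarrow>\<^sub>E {x::'a. x \<noteq> 0}) \<and> yv \<in> (Y \<rightarrow>\<^sub>E {y. y \<noteq> 0}) \<and> z \<noteq> 0 \<and>
            (\<Sum>i\<in>X. xv i) = (\<Sum>j\<in>Y. yv j) \<and> lam * z ^ a * (\<Prod>i\<in>X. xv i ^ p i) = (\<Prod>j\<in>Y. yv j ^ qq j)}"
proof -
  obtain xv yv z where dd: "d = (xv, yv, z)" by (cases d)
  have xv: "xv \<in> X \<rightarrow>\<^sub>E {x. x \<noteq> 0}" and yv: "yv \<in> Y \<rightarrow>\<^sub>E {x. x \<noteq> 0}" and z: "z \<noteq> 0"
    and sm: "(\<Sum>i\<in>X. xv i) = (\<Sum>j\<in>Y. yv j)"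
    and pr: "lam * z ^ a * (\<Prod>i\<in>X. xv i ^ p i) = (\<Prod>j\<in>Y. yv j ^ qq j)"
    using d dd by auto
  have m1: "restrict (\<lambda>i. s * xv i) X \<in> X \<rightarrow>\<^sub>E {x. x \<noteq> 0}" using xv s by (auto simp: PiE_def Pi_def)
  have m2: "restrict (\<lambda>j. s * yv j) Y \<in> Y \<rightarrow>\<^sub>E {x. x \<noteq> 0}" using yv s by (auto simp: PiE_def Pi_def)
  have s1: "(\<Sum>i\<in>X. restrict (\<lambda>i. s * xv i) X i) = s * (\<Sum>i\<in>X. xv i)"
    by (simp add: sum_distrib_left)
  have s2: "(\<Sum>j\<in>Y. restrict (\<lambda>j. s * yv j) Y j) = s * (\<Sum>j\<in>Y. yv j)"
    by (simp add: sum_distrib_left)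
  have p1: "(\<Prod>i\<in>X. restrict (\<lambda>i. s * xv i) X i ^ p i) = s powi int (\<Sum>i\<in>X. p i) * (\<Prod>i\<in>X. xv i ^ p i)"
    by (simp add: power_mult_distrib prod.distrib power_sum del: of_nat_sum)
  have p2: "(\<Prod>j\<in>Y. restrict (\<lambda>j. s * yv j) Y j ^ qq j) = s powi int (\<Sum>j\<in>Y. qq j) * (\<Prod>j\<in>Y. yv j ^ qq j)"
    by (simp add: power_mult_distrib prod.distrib power_sum del: of_nat_sum)
  have z1: "(z * s powi (- e)) ^ a = z ^ a * s powi (- (int a * e))"
  proof -
    have "(s powi (- e)) ^ a = (s powi (- e)) powi int a" by (simp only: power_int_of_nat)
    also have "\<dots> = s powi (- e * int a)" by (rule power_int_mult[symmetric])
    finally have "(s powi (- e)) ^ a = s powi (- e * int a)" .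
    thus ?thesis by (simp add: power_mult_distrib mult_ac)
  qed
  have ex: "- (int a * e) + int (\<Sum>i\<in>X. p i) = int (\<Sum>j\<in>Y. qq j)" using e by simp
  have "lam * (z * s powi (- e)) ^ a * (\<Prod>i\<in>X. restrict (\<lambda>i. s * xv i) X i ^ p i)
      = (s powi (- (int a * e)) * s powi int (\<Sum>i\<in>X. p i)) * (lam * z ^ a * (\<Prod>i\<in>X. xv i ^ p i))"
    unfolding z1 p1 by (simp add: mult_ac)
  also have "s powi (- (int a * e)) * s powi int (\<Sum>i\<in>X. p i) = s powi int (\<Sum>j\<in>Y. qq j)"
    using s ex by (simp add: power_int_add[symmetric])
  also note pr
  finally have "lam * (z * s powi (- e)) ^ a * (\<Prod>i\<in>X. restrict (\<lambda>i. s * xv i) X i ^ p i)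
      = (\<Prod>j\<in>Y. restrict (\<lambda>j. s * yv j) Y j ^ qq j)" unfolding p2 .
  thus ?thesis unfolding dd scl_def using m1 m2 s1 s2 sm s z by simp
qed

lemma scale_count:
  fixes X Y :: "nat set" and p qq :: "nat \<Rightarrow> nat" and a :: nat and lam :: 'a and e :: int and c :: "nat + nat"
  assumes fin: "finite X" "finite Y"
    and e: "int (\<Sum>i\<in>X. p i) - int (\<Sum>j\<in>Y. qq j) = int a * e"
    and c: "case c of Inl i \<Rightarrow> i \<in> X | Inr j \<Rightarrow> j \<in> Y"
  shows "card {(xv, yv, z). xv \<in> (X \<rightarrow>\<^sub>E {x::'a. x \<noteq> 0}) \<and> yv \<in> (Y \<rightarrow>\<^sub>E {y. y \<noteq> 0}) \<and> z \<noteq> 0 \<and>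
            (\<Sum>i\<in>X. xv i) = (\<Sum>j\<in>Y. yv j) \<and> lam * z ^ a * (\<Prod>i\<in>X. xv i ^ p i) = (\<Prod>j\<in>Y. yv j ^ qq j)}
       = (CARD('a) - 1) * card {(xv, yv, z). xv \<in> (X \<rightarrow>\<^sub>E {x::'a. x \<noteq> 0}) \<and> yv \<in> (Y \<rightarrow>\<^sub>E {y. y \<noteq> 0}) \<and> z \<noteq> 0 \<and>
            (case c of Inl i \<Rightarrow> xv i = 1 | Inr j \<Rightarrow> yv j = 1) \<and>
            (\<Sum>i\<in>X. xv i) = (\<Sum>j\<in>Y. yv j) \<and> lam * z ^ a * (\<Prod>i\<in>X. xv i ^ p i) = (\<Prod>j\<in>Y. yv j ^ qq j)}"
    (is "card ?All = _ * card ?Fix")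
proof -
  let ?U = "{x::'a. x \<noteq> 0}"
  define co where "co = (\<lambda>d::(nat \<Rightarrow> 'a) \<times> (nat \<Rightarrow> 'a) \<times> 'a. case c of Inl i \<Rightarrow> fst d i | Inr j \<Rightarrow> fst (snd d) j)"
  have Fix: "?Fix = {d \<in> ?All. co d = 1}" unfolding co_def by (cases c) auto
  have co_scl: "co (scl X Y e s d) = s * co d" for s d
    unfolding co_def scl_def using c by (cases c) auto
  have co_nz: "d \<in> ?All \<Longrightarrow> co d \<noteq> 0" for d
    unfolding co_def using c by (cases c) (auto simp: PiE_def Pi_def)
  have mem: "s \<noteq> 0 \<Longrightarrow> d \<in> ?All \<Longrightarrow> scl X Y e s d \<in> ?All" for s d
    by (rule scl_mem[OF fin _ e]) auto
  have one: "d \<in> ?All \<Longrightarrow> scl X Y e 1 d = d" for d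
    by (rule scl_1) auto
  have inj: "inj_on (\<lambda>(t, d). scl X Y e t d) (?U \<times> ?Fix)"
  proof (rule inj_onI)
    fix u v
    assume u: "u \<in> ?U \<times> ?Fix" and v: "v \<in> ?U \<times> ?Fix"
      and eq0: "(\<lambda>(t, d). scl X Y e t d) u = (\<lambda>(t, d). scl X Y e t d) v"
    obtain t d where ud: "u = (t, d)" by (cases u)
    obtain t' d' where vd: "v = (t', d')" by (cases v)
    have t: "t \<in> ?U" and d: "d \<in> ?Fix" using u ud by auto
    have t': "t' \<in> ?U" and d': "d' \<in> ?Fix" using v vd by auto
    have eq: "scl X Y e t d = scl X Y e t' d'" using eq0 ud vd by simp
    have dA: "d \<in> ?All" "co d = 1" and dA': "d' \<in> ?All" "co d' = 1" using d d' Fix by auto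
    have "t = t'" using arg_cong[OF eq, of co] co_scl dA dA' by simp
    moreover have "d = d'"
    proof -
      have "d = scl X Y e (inverse t) (scl X Y e t d)" using t one[OF dA(1)] by (simp add: scl_comp)
      also have "\<dots> = scl X Y e (inverse t') (scl X Y e t' d')" using eq \<open>t = t'\<close> by simp
      also have "\<dots> = d'" using t' one[OF dA'(1)] by (simp add: scl_comp)
      finally show ?thesis .
    qed
    ultimately show "u = v" using ud vd by simp
  qed
  have img: "(\<lambda>(t, d). scl X Y e t d) ` (?U \<times> ?Fix) = ?All"
  proof
    show "(\<lambda>(t, d). scl X Y e t d) ` (?U \<times> ?Fix) \<subseteq> ?All"
    proof (rule subsetI)
      fix w assume "w \<in> (\<lambda>(t, d). scl X Y e t d) ` (?U \<times> ?Fix)"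
      then obtain u where u: "u \<in> ?U \<times> ?Fix" and w: "w = (\<lambda>(t, d). scl X Y e t d) u" by blast
      obtain t d where ud: "u = (t, d)" by (cases u)
      have t: "t \<noteq> 0" and d: "d \<in> ?Fix" using u ud by auto
      have dA: "d \<in> ?All" using d unfolding Fix by blast
      show "w \<in> ?All" unfolding w ud using mem[OF t dA] by simp
    qed
  next
    show "?All \<subseteq> (\<lambda>(t, d). scl X Y e t d) ` (?U \<times> ?Fix)"
    proof
      fix d assume d: "d \<in> ?All"
      let ?t = "co d"
      have t: "?t \<noteq> 0" using co_nz[OF d] .
      have d1: "scl X Y e (inverse ?t) d \<in> ?Fix"
        unfolding Fix using mem[OF _ d, of "inverse ?t"] t co_scl by simp
      have "scl X Y e ?t (scl X Y e (inverse ?t) d) = d"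
        using t one[OF d] by (simp add: scl_comp)
      thus "d \<in> (\<lambda>(t, d). scl X Y e t d) ` (?U \<times> ?Fix)"
        using d1 t by (intro image_eqI[of _ _ "(?t, scl X Y e (inverse ?t) d)"]) auto
    qed
  qed
  have "card ?All = card (?U \<times> ?Fix)" using card_image[OF inj] img by simp
  also have "\<dots> = (CARD('a) - 1) * card ?Fix" using card_U by (simp add: card_cartesian_product)
  finally show ?thesis .
qed
end
lemma alg1: "(n::complex) \<noteq> 0 \<Longrightarrow> q \<noteq> 0 \<Longrightarrow> n * F = A / q + n / q * S \<Longrightarrow> F = A / (n * q) + 1 / q * S"
proof -
  assume n: "n \<noteq> 0" and q: "q \<noteq> 0" and e: "n * F = A / q + n / q * S"
  have "F = (n * F) / n" using n by simp
  also have "\<dots> = (A / q + n / q * S) / n" using e by simp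
  also have "\<dots> = A / (n * q) + 1 / q * S" using n q by (simp add: field_simps)
  finally show ?thesis .
qed

lemma alg2: "(n::complex) \<noteq> 0 \<Longrightarrow> q \<noteq> 0 \<Longrightarrow> P * (A / n) = B \<Longrightarrow> sg * sg = 1
   \<Longrightarrow> P * (A / (n * q) + 1 / q * S) = B / q + sg * P / q * (sg * S)"
proof -
  assume n: "n \<noteq> 0" and q: "q \<noteq> 0" and e: "P * (A / n) = B" and sg: "sg * sg = 1"
  have "P * (A / (n * q) + 1 / q * S) = (P * (A / n)) / q + P / q * S" using n q by (simp add: field_simps)
  also have "\<dots> = B / q + (sg * sg) * P / q * S" using e sg by simp
  finally show ?thesis by (simp add: mult_ac)
qed

lemma powi_aux: "(x::complex) \<noteq> 0 \<Longrightarrow> x powi A * (x ^ k / x) = x powi (A + (int k + (-1)))"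
proof -
  assume x: "x \<noteq> 0"
  have e1: "x powi (int k + (-1)) = x ^ k / x"
    using power_int_add[of x "int k" "-1"] x by (simp add: divide_inverse power_int_minus)
  show ?thesis by (subst power_int_add[OF disjI1[OF x]]) (simp only: e1)
qed

theorem mainTheorem13:
  fixes r s :: nat and p qq :: "nat \<Rightarrow> nat"
    and \<psi> \<omega> :: "'a::{field,finite} \<Rightarrow> complex"
    and lam :: 'a and C :: "(nat \<times> nat) list" and c :: "nat + nat"
  assumes p_pos: "\<forall>i\<in>{1..r}. p i > 0"
    and q_pos: "\<forall>j\<in>{1..s}. qq j > 0"
    and sums: "(\<Sum>i=1..r. p i) = (\<Sum>j=1..s. qq j)"
    and coprime: "Gcd (p ` {1..r} \<union> qq ` {1..s}) = 1"
    and psi: "nontriv_add_char \<psi>"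
    and omega: "mult_char_generator \<omega>"
    and lam: "lam \<noteq> 0"
    and cell: "is_cell r s C" and nonempty: "C \<noteq> []"
    and S_bound: "card_S C \<le> r + s - 1"
    and choice: "valid_choice r s C c"
  shows "N_cell r s p qq C lam c =
     (of_nat (CARD('a)) - 1) powi (int r + int s - int (length C) - 2) / of_nat (CARD('a))
     + (-1) ^ card_S C * (of_nat (CARD('a)) - 1) powi (int (card_S C) - int (length C) - 1)
         / of_nat (CARD('a))
       * (\<Sum>m = 0..CARD('a) - 2.
            (if (a_S p qq C * m) mod (CARD('a) - 1) = 0 then 1 else 0)
            * (\<Prod>i=1..r. gauss \<omega> \<psi> (int (p i) * int m))
            * (\<Prod>j=1..s. gauss \<omega> \<psi> (- (int (qq j) * int m)))
            * (\<omega> ((-1) ^ (\<Sum>j=1..s. qq j) * lam)) ^ m)"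
proof -
  interpret chars \<psi> \<omega> by (rule chars.intro[OF psi omega])
  define X where "X = {1..r} - Sx C"
  define Y where "Y = {1..s} - Sy C"
  define a where "a = a_S p qq C"
  let ?n = "CARD('a) - 1"
  have SxR: "Sx C \<subseteq> {1..r}" and SyR: "Sy C \<subseteq> {1..s}"
    using cell unfolding is_cell_def Sx_def Sy_def by auto
  have fin: "finite X" "finite Y" unfolding X_def Y_def by auto
  have finS: "finite (Sx C)" "finite (Sy C)" using SxR SyR finite_subset by auto
  have aP: "a dvd p i" if "i \<in> Sx C" for i
    unfolding a_def a_S_def by (rule Gcd_dvd) (use that in auto)
  have aQ: "a dvd qq j" if "j \<in> Sy C" for j
    unfolding a_def a_S_def by (rule Gcd_dvd) (use that in auto)
  have gcd1: "Gcd (insert a (p ` X \<union> qq ` Y)) = 1"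
  proof -
    let ?G = "Gcd (insert a (p ` X \<union> qq ` Y))"
    have Ga: "?G dvd a" by (rule Gcd_dvd) auto
    have "?G dvd Gcd (p ` {1..r} \<union> qq ` {1..s})"
    proof (rule Gcd_greatest)
      fix b assume "b \<in> p ` {1..r} \<union> qq ` {1..s}"
      then consider i where "i \<in> {1..r}" "b = p i" | j where "j \<in> {1..s}" "b = qq j" by blast
      thus "?G dvd b"
      proof cases
        case 1
        show ?thesis
        proof (cases "i \<in> Sx C")
          case True thus ?thesis using 1 aP Ga dvd_trans by blast
        next
          case False hence "i \<in> X" using 1 X_def by auto
          thus ?thesis using 1 by (intro Gcd_dvd) auto
        qed
      next
        case 2
        show ?thesis
        proof (cases "j \<in> Sy C")
          case True thus ?thesis using 2 aQ Ga dvd_trans by blast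
        next
          case False hence "j \<in> Y" using 2 Y_def by auto
          thus ?thesis using 2 by (intro Gcd_dvd) auto
        qed
      qed
    qed
    thus ?thesis using coprime by simp
  qed
  have sumP: "(\<Sum>i=1..r. p i) = (\<Sum>i\<in>X. p i) + (\<Sum>i\<in>Sx C. p i)"
    unfolding X_def using SxR by (simp add: sum.subset_diff)
  have sumQ: "(\<Sum>j=1..s. qq j) = (\<Sum>j\<in>Y. qq j) + (\<Sum>j\<in>Sy C. qq j)"
    unfolding Y_def using SyR by (simp add: sum.subset_diff)
  have dP: "a dvd (\<Sum>i\<in>Sx C. p i)" by (rule dvd_sum) (use aP in auto)
  have dQ: "a dvd (\<Sum>j\<in>Sy C. qq j)" by (rule dvd_sum) (use aQ in auto)
  have adv: "int a dvd (int (\<Sum>i\<in>X. p i) - int (\<Sum>j\<in>Y. qq j))"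
  proof -
    have "int (\<Sum>i\<in>X. p i) - int (\<Sum>j\<in>Y. qq j) = int (\<Sum>j\<in>Sy C. qq j) - int (\<Sum>i\<in>Sx C. p i)"
      using sums sumP sumQ by linarith
    moreover have "int a dvd int (\<Sum>j\<in>Sy C. qq j) - int (\<Sum>i\<in>Sx C. p i)"
      by (rule dvd_diff) (simp_all only: int_dvd_int_iff dP dQ)
    ultimately show ?thesis by simp
  qed
  then obtain e where e: "int (\<Sum>i\<in>X. p i) - int (\<Sum>j\<in>Y. qq j) = int a * e" by (auto elim: dvdE)
  have cX: "case c of Inl i \<Rightarrow> i \<in> X | Inr j \<Rightarrow> j \<in> Y"
    using choice unfolding valid_choice_def X_def Y_def by (cases c) auto
  define Fix where "Fix = {(xv, yv, z). xv \<in> (X \<rightarrow>\<^sub>E {x::'a. x \<noteq> 0}) \<and> yv \<in> (Y \<rightarrow>\<^sub>E {y. y \<noteq> 0}) \<and> z \<noteq> 0 \<and>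
            (case c of Inl i \<Rightarrow> xv i = 1 | Inr j \<Rightarrow> yv j = 1) \<and>
            (\<Sum>i\<in>X. xv i) = (\<Sum>j\<in>Y. yv j) \<and> lam * z ^ a * (\<Prod>i\<in>X. xv i ^ p i) = (\<Prod>j\<in>Y. yv j ^ qq j)}"
  define All where "All = {(xv, yv, z). xv \<in> (X \<rightarrow>\<^sub>E {x::'a. x \<noteq> 0}) \<and> yv \<in> (Y \<rightarrow>\<^sub>E {y. y \<noteq> 0}) \<and> z \<noteq> 0 \<and>
            (\<Sum>i\<in>X. xv i) = (\<Sum>j\<in>Y. yv j) \<and> lam * z ^ a * (\<Prod>i\<in>X. xv i ^ p i) = (\<Prod>j\<in>Y. yv j ^ qq j)}"
  have N': "N'_cell r s p qq C lam c = card Fix"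
    unfolding N'_cell_def Fix_def X_def Y_def a_def ..
  have cnt: "card All = ?n * card Fix"
    unfolding All_def Fix_def by (rule scale_count[OF fin e cX])
  define R where "R = (\<lambda>m. (if int ?n dvd int a * int m then 1 else 0)
          * (\<Prod>i\<in>X. gauss \<omega> \<psi> (int (p i) * int m)) * (\<Prod>j\<in>Y. gauss \<omega> \<psi> (- (int (qq j) * int m)))
          * \<omega> ((-1) ^ (\<Sum>j\<in>Y. qq j) * lam) ^ m)"
  have cs: "of_nat (card All) = of_nat ?n ^ (card X + card Y) / of_nat CARD('a)
     + of_nat ?n / of_nat CARD('a) * (\<Sum>m<?n. R m)"
    unfolding All_def R_def by (rule charsum_count[OF fin lam adv gcd1])
  have n0: "(of_nat ?n :: complex) \<noteq> 0" using nn_pos by simp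
  have q0: "(of_nat CARD('a) :: complex) \<noteq> 0" by simp
  have nC: "(of_nat CARD('a) - 1 :: complex) = of_nat ?n" using card_ge2 by (simp add: of_nat_diff)
  have cardXY: "int (card X + card Y) = int r + int s - int (card_S C)"
  proof -
    have "card X = r - card (Sx C)" unfolding X_def using SxR by (simp add: card_Diff_subset finS)
    moreover have "card Y = s - card (Sy C)" unfolding Y_def using SyR by (simp add: card_Diff_subset finS)
    moreover have "card (Sx C) \<le> r" using card_mono[OF _ SxR] by simp
    moreover have "card (Sy C) \<le> s" using card_mono[OF _ SyR] by simp
    ultimately show ?thesis unfolding card_S_def by simp
  qed
  have ivl: "{0..CARD('a) - 2} = {..<?n}" using card_ge2 by auto
  have termwise: "(if (a_S p qq C * m) mod (CARD('a) - 1) = 0 then 1 else 0)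
            * (\<Prod>i=1..r. gauss \<omega> \<psi> (int (p i) * int m))
            * (\<Prod>j=1..s. gauss \<omega> \<psi> (- (int (qq j) * int m)))
            * (\<omega> ((-1) ^ (\<Sum>j=1..s. qq j) * lam)) ^ m = (-1) ^ card_S C * R m" for m
  proof (cases "?n dvd a * m")
    case False
    hence "\<not> int ?n dvd int a * int m" by (simp only: of_nat_mult[symmetric] int_dvd_int_iff) simp
    thus ?thesis using False unfolding R_def a_def[symmetric] by (simp add: dvd_eq_mod_eq_0)
  next
    case True
    have T': "int ?n dvd int a * int m" using True by (simp only: of_nat_mult[symmetric] int_dvd_int_iff)
    have gP: "gauss \<omega> \<psi> (int (p i) * int m) = -1" if "i \<in> Sx C" for i
    proof (rule gauss_dvd)
      have "?n dvd p i * m" using True aP[OF that] by (meson dvd_mult_left dvd_trans mult_dvd_mono dvd_refl)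
      thus "int ?n dvd int (p i) * int m" by (simp only: of_nat_mult[symmetric] int_dvd_int_iff)
    qed
    have gQ: "gauss \<omega> \<psi> (- (int (qq j) * int m)) = -1" if "j \<in> Sy C" for j
    proof (rule gauss_dvd)
      have "?n dvd qq j * m" using True aQ[OF that] by (meson dvd_mult_left dvd_trans mult_dvd_mono dvd_refl)
      thus "int ?n dvd - (int (qq j) * int m)" by (simp only: dvd_minus_iff of_nat_mult[symmetric] int_dvd_int_iff)
    qed
    have pr1: "(\<Prod>i=1..r. gauss \<omega> \<psi> (int (p i) * int m))
        = (\<Prod>i\<in>X. gauss \<omega> \<psi> (int (p i) * int m)) * (-1) ^ card (Sx C)"
    proof -
      have "(\<Prod>i=1..r. gauss \<omega> \<psi> (int (p i) * int m))
          = (\<Prod>i\<in>X. gauss \<omega> \<psi> (int (p i) * int m)) * (\<Prod>i\<in>Sx C. gauss \<omega> \<psi> (int (p i) * int m))"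
        unfolding X_def using SxR by (simp add: prod.subset_diff)
      also have "(\<Prod>i\<in>Sx C. gauss \<omega> \<psi> (int (p i) * int m)) = (\<Prod>i\<in>Sx C. -1)"
        by (rule prod.cong[OF refl]) (rule gP)
      finally show ?thesis by simp
    qed
    have pr2: "(\<Prod>j=1..s. gauss \<omega> \<psi> (- (int (qq j) * int m)))
        = (\<Prod>j\<in>Y. gauss \<omega> \<psi> (- (int (qq j) * int m))) * (-1) ^ card (Sy C)"
    proof -
      have "(\<Prod>j=1..s. gauss \<omega> \<psi> (- (int (qq j) * int m)))
          = (\<Prod>j\<in>Y. gauss \<omega> \<psi> (- (int (qq j) * int m))) * (\<Prod>j\<in>Sy C. gauss \<omega> \<psi> (- (int (qq j) * int m)))"
        unfolding Y_def using SyR by (simp add: prod.subset_diff)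
      also have "(\<Prod>j\<in>Sy C. gauss \<omega> \<psi> (- (int (qq j) * int m))) = (\<Prod>j\<in>Sy C. -1)"
        by (rule prod.cong[OF refl]) (rule gQ)
      finally show ?thesis by simp
    qed
    have om_eq: "\<omega> ((-1) ^ (\<Sum>j=1..s. qq j) * lam) ^ m = \<omega> ((-1) ^ (\<Sum>j\<in>Y. qq j) * lam) ^ m"
    proof -
      have m1: "(-1::'a) \<noteq> 0" by simp
      have "(-1::'a) ^ (\<Sum>j=1..s. qq j) * lam = (-1) ^ (\<Sum>j\<in>Sy C. qq j) * ((-1) ^ (\<Sum>j\<in>Y. qq j) * lam)"
        unfolding sumQ by (simp add: power_add mult_ac)
      hence "\<omega> ((-1) ^ (\<Sum>j=1..s. qq j) * lam)
          = \<omega> (-1) ^ (\<Sum>j\<in>Sy C. qq j) * \<omega> ((-1) ^ (\<Sum>j\<in>Y. qq j) * lam)"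
        using lam by (simp add: om_mult om_pow)
      moreover have "(\<omega> (-1) ^ (\<Sum>j\<in>Sy C. qq j)) ^ m = 1"
      proof -
        obtain k where k: "(\<Sum>j\<in>Sy C. qq j) = a * k" using dQ by (auto elim: dvdE)
        obtain k2 where k2: "a * m = ?n * k2" using True by (auto elim: dvdE)
        have "(\<Sum>j\<in>Sy C. qq j) * m = ?n * (k2 * k)" using k k2 by (simp add: mult_ac)
        hence "(\<omega> (-1) ^ (\<Sum>j\<in>Sy C. qq j)) ^ m = (\<omega> (-1) ^ ?n) ^ (k2 * k)"
          by (simp add: power_mult[symmetric])
        thus ?thesis using om_root[OF m1] by simp
      qed
      ultimately show ?thesis by (simp add: power_mult_distrib)
    qed
    have "(-1 :: complex) ^ card_S C * (-1) ^ card_S C = 1"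
      by (simp add: power_add[symmetric])
    show ?thesis
      unfolding R_def pr1 pr2 om_eq a_def[symmetric] card_S_def using True T'
      by (simp add: dvd_eq_mod_eq_0 power_add mult_ac)
  qed
  have sumfull: "(\<Sum>m = 0..CARD('a) - 2.
            (if (a_S p qq C * m) mod (CARD('a) - 1) = 0 then 1 else 0)
            * (\<Prod>i=1..r. gauss \<omega> \<psi> (int (p i) * int m))
            * (\<Prod>j=1..s. gauss \<omega> \<psi> (- (int (qq j) * int m)))
            * (\<omega> ((-1) ^ (\<Sum>j=1..s. qq j) * lam)) ^ m) = (-1) ^ card_S C * (\<Sum>m<?n. R m)"
    unfolding ivl termwise by (simp add: sum_distrib_left)
  have fixc: "of_nat (card Fix) = of_nat ?n ^ (card X + card Y) / (of_nat ?n * of_nat CARD('a))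
     + 1 / of_nat CARD('a) * (\<Sum>m<?n. R m)"
  proof -
    have "of_nat ?n * (of_nat (card Fix) :: complex) = of_nat (card All)" using cnt by simp
    also note cs
    finally show ?thesis by (rule alg1[OF n0 q0])
  qed
  have pw: "of_nat ?n powi (int (card_S C) - int (length C) - 1) * (of_nat ?n ^ (card X + card Y) / (of_nat ?n :: complex))
      = of_nat ?n powi (int r + int s - int (length C) - 2)"
  proof -
    have "of_nat ?n powi (int (card_S C) - int (length C) - 1) * (of_nat ?n ^ (card X + card Y) / (of_nat ?n :: complex))
      = of_nat ?n powi ((int (card_S C) - int (length C) - 1) + (int (card X + card Y) + (-1)))"
      by (rule powi_aux[OF n0])
    also have "(int (card_S C) - int (length C) - 1) + (int (card X + card Y) + (-1)) = int r + int s - int (length C) - 2"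
      using cardXY by linarith
    finally show ?thesis .
  qed
  have sgn: "(-1 :: complex) ^ card_S C * (-1) ^ card_S C = 1"
    by (simp add: power_add[symmetric])
  show ?thesis
    unfolding N_cell_def N' nC sumfull fixc
    by (rule alg2[OF n0 q0 pw sgn])
qed

end
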